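(* Let $n\ge1$, $H\in\mathbb{R}^{n\times n}$ symmetric positive semidefinite, $h\in\mathbb{R}^n$ with $h\neq0$, $\lambda=\frac{1}{4\sqrt2\|h\|_2}$, and $\epsilon>0$. Let $(z^k,v^k,s^k)_{k\ge0}$ be generated by the predictor–corrector algorithm described in the context, initialized with $z^0=0$, $\gamma^0=\mathbf{1}_n-\lambda h$, $\theta^0=\mathbf{1}_n+\lambda h$, $\phi^0=\psi^0=\mathbf{1}_n$ (so $v^0=(\gamma^0,\theta^0)$, $s^0=(\phi^0,\psi^0)$). Then for every $k$, \[ \mu^{k+1}\le\Big(1-\frac{0.2348}{\sqrt{2n}}\Big)^2\mu^k , \] and the algorithm (which stops at the first $k$ with $(v^k)^\top s^k\le\epsilon$) requires at most \[ N_{\max}=\left\lceil\frac{\log\big(\frac{2n}{\epsilon}\big)}{-2\log\big(1-\frac{0.2348}{\sqrt{2n}}\big)}\right\rceil \] iterations, i.e. $(v^k)^\top s^k\le\epsilon$ holds for all $k\ge N_{\max}$.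
   Context: Box-QP: $\min_{z}\frac12 z^\top Hz+z^\top h$ s.t. $-\mathbf{1}_n\le z\le\mathbf{1}_n$, with objective scaled by $2\lambda$ (which does not change the minimizer). Variables: $z\in\mathbb{R}^n$, $v=(\gamma,\theta)\in\mathbb{R}^{2n}$, $s=(\phi,\psi)\in\mathbb{R}^{2n}$. With $\Omega=[I_n,-I_n]$, the Newton system at $(z,v,s)$ with parameters $\sigma,\mu$ is $(2\lambda H)\Delta z+\Omega\Delta v=0$, $\Omega^\top\Delta z+\Delta s=0$, $s\odot\Delta v+v\odot\Delta s=\sigma\mu\mathbf{1}_{2n}-v\odot s$. Algorithm, iteration $k$: set $\mu^k=\frac{(v^k)^\top s^k}{2n}$; let $(\Delta z_p,\Delta v_p,\Delta s_p)$ solve the Newton system at $(z^k,v^k,s^k)$ with $\sigma=0$, $\mu=\mu^k$; $\Delta\mu_p=\frac{\Delta v_p^\top\Delta s_p}{2n}$; $\alpha^k=\min\big(\frac12,\sqrt{\mu^k/(8\|\Delta v_p\odot\Delta s_p-\Delta\mu_p\mathbf{1}_{2n}\|)}\big)$ (square-root term read as $+\infty$ if the norm is $0$); $(\hat z^k,\hat v^k,\hat s^k)=(z^k,v^k,s^k)+\alpha^k(\Delta z_p,\Delta v_p,\Delta s_p)$; $\hat\mu^k=\frac{(\hat v^k)^\top\hat s^k}{2n}$; let $(\Delta z_c,\Delta v_c,\Delta s_c)$ solve the Newton system at $(\hat z^k,\hat v^k,\hat s^k)$ with $\sigma=1$, $\mu=\hat\mu^k$; $(z^{k+1},v^{k+1},s^{k+1})=(\hat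 z^k,\hat v^k,\hat s^k)+(\Delta z_c,\Delta v_c,\Delta s_c)$. $\odot$ is the Hadamard product, $\mathbf{1}_m$ the all-ones vector, $\|\cdot\|$ the Euclidean norm. *)

theory Defs
  imports "HOL-Analysis.Analysis"
begin

text \<open>A state of the interior point method: (z, gamma, theta, phi, psi), with
  v = (gamma, theta) and s = (phi, psi); all blocks live in R^n = real^'n.\<close>

type_synonym 'n ipm_state =
  "(real^'n) \<times> (real^'n) \<times> (real^'n) \<times> (real^'n) \<times> (real^'n)"

definition ones :: "real^'n" where "ones = (\<chi> i. 1)"

definition vts :: "'n::finite ipm_state \<Rightarrow> real" where
  "vts x = (case x of (z, g, t, f, p) \<Rightarrow> g \<bullet> f + t \<bullet> p)"

definition mu :: "'n::finite ipm_state \<Rightarrow> real" where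
  "mu x = vts x / (2 * real CARD('n))"

text \<open>The Newton system at x with parameters sigma, mu, Omega = [I, -I]:
  (2 lam H) dz + Omega dv = 0, Omega^T dz + ds = 0,
  s .* dv + v .* ds = sigma mu 1 - v .* s.\<close>
definition newton_sys ::
  "real^'n^'n \<Rightarrow> real \<Rightarrow> real \<Rightarrow> real \<Rightarrow> 'n::finite ipm_state \<Rightarrow> 'n ipm_state \<Rightarrow> bool" where
  "newton_sys H lam \<sigma> m x d = (case x of (z, g, t, f, p) \<Rightarrow> case d of (dz, dg, dt, df, dp) \<Rightarrow>
      (2 * lam) *\<^sub>R (H *v dz) + dg - dt = 0 \<and>
      dz + df = 0 \<and> - dz + dp = 0 \<and>
      (\<forall>i. f$i * dg$i + g$i * df$i = \<sigma> * m - g$i * f$i) \<and>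
      (\<forall>i. p$i * dt$i + t$i * dp$i = \<sigma> * m - t$i * p$i))"

definition dev :: "'n::finite ipm_state \<Rightarrow> real" where
  "dev d = (case d of (dz, dg, dt, df, dp) \<Rightarrow>
      sqrt (\<Sum>i\<in>UNIV. (dg$i * df$i - mu d)\<^sup>2 + (dt$i * dp$i - mu d)\<^sup>2))"

text \<open>Step length alpha = min(1/2, sqrt(mu/(8 N))), the square root being +infinity when N = 0.\<close>
definition step_alpha :: "real \<Rightarrow> real \<Rightarrow> real" where
  "step_alpha m N = (if N = 0 then 1/2 else min (1/2) (sqrt (m / (8 * N))))"

definition pc_step :: "real^'n^'n \<Rightarrow> real \<Rightarrow> 'n::finite ipm_state \<Rightarrow> 'n ipm_state \<Rightarrow> bool" where
  "pc_step H lam x x' = (\<exists>dpr dco.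
      newton_sys H lam 0 (mu x) x dpr \<and>
      (let xh = x + step_alpha (mu x) (dev dpr) *\<^sub>R dpr in
        newton_sys H lam 1 (mu xh) xh dco \<and> x' = xh + dco))"

end

theory Submission
  imports Defs "HOL-Analysis.Analysis"
begin


lemma sumsq_le_sqsum:
  fixes f :: "'i \<Rightarrow> real"
  assumes "finite A" "\<And>i. i \<in> A \<Longrightarrow> 0 \<le> f i"
  shows "(\<Sum>i\<in>A. (f i)\<^sup>2) \<le> (\<Sum>i\<in>A. f i)\<^sup>2"
proof -
  have "(\<Sum>i\<in>A. (f i)\<^sup>2) \<le> (\<Sum>i\<in>A. f i * (\<Sum>j\<in>A. f j))"
  proof (rule sum_mono)
    fix i assume i: "i \<in> A"
    have "f i \<le> (\<Sum>j\<in>A. f j)" using assms i by (intro member_le_sum) auto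
    then show "(f i)\<^sup>2 \<le> f i * (\<Sum>j\<in>A. f j)" using assms(2)[OF i]
      by (simp add: power2_eq_square mult_left_mono)
  qed
  also have "\<dots> = (\<Sum>i\<in>A. f i)\<^sup>2" by (simp add: sum_distrib_right power2_eq_square)
  finally show ?thesis .
qed

lemma pq_sum_le:
  fixes p q :: "'i \<Rightarrow> real"
  shows "(\<Sum>i\<in>A. p i * q i) \<le> (\<Sum>i\<in>A. (p i + q i)\<^sup>2) / 4"
proof -
  have "(\<Sum>i\<in>A. p i * q i) \<le> (\<Sum>i\<in>A. (p i + q i)\<^sup>2 / 4)"
  proof (rule sum_mono)
    fix i
    have "(p i + q i)\<^sup>2 / 4 - p i * q i = (p i - q i)\<^sup>2 / 4"
      by (simp add: power2_eq_square algebra_simps)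
    moreover have "0 \<le> (p i - q i)\<^sup>2 / 4" by simp
    ultimately show "p i * q i \<le> (p i + q i)\<^sup>2 / 4" by linarith
  qed
  then show ?thesis by (simp add: sum_divide_distrib)
qed

lemma pq_lemma:
  fixes p q :: "'i \<Rightarrow> real"
  assumes fin: "finite A" and nn: "0 \<le> (\<Sum>i\<in>A. p i * q i)"
  shows "(\<Sum>i\<in>A. (p i * q i)\<^sup>2) \<le> (\<Sum>i\<in>A. (p i + q i)\<^sup>2)\<^sup>2 / 8"
proof -
  define P where "P = {i\<in>A. 0 \<le> p i * q i}"
  define Q where "Q = A - P"
  have fP: "finite P" and fQ: "finite Q" using fin by (auto simp: P_def Q_def)
  have AU: "A = P \<union> Q" and dj: "P \<inter> Q = {}" by (auto simp: P_def Q_def)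
  define a where "a = (\<Sum>i\<in>P. p i * q i)"
  define b where "b = (\<Sum>i\<in>Q. - (p i * q i))"
  have a0: "0 \<le> a" unfolding a_def by (rule sum_nonneg) (auto simp: P_def)
  have b0: "0 \<le> b" unfolding b_def by (rule sum_nonneg) (auto simp: P_def Q_def)
  have "(\<Sum>i\<in>A. p i * q i) = a - b"
    unfolding a_def b_def AU by (simp add: sum.union_disjoint[OF fP fQ dj] sum_negf)
  with nn have ba: "b \<le> a" by simp
  have s1: "(\<Sum>i\<in>P. (p i * q i)\<^sup>2) \<le> a\<^sup>2"
    unfolding a_def by (rule sumsq_le_sqsum[OF fP]) (auto simp: P_def)
  have s2: "(\<Sum>i\<in>Q. (- (p i * q i))\<^sup>2) \<le> b\<^sup>2"
    unfolding b_def by (rule sumsq_le_sqsum[OF fQ]) (auto simp: P_def Q_def)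
  have "(\<Sum>i\<in>A. (p i * q i)\<^sup>2) = (\<Sum>i\<in>P. (p i * q i)\<^sup>2) + (\<Sum>i\<in>Q. (- (p i * q i))\<^sup>2)"
    unfolding AU by (simp add: sum.union_disjoint[OF fP fQ dj])
  also have "\<dots> \<le> a\<^sup>2 + b\<^sup>2" using s1 s2 by simp
  also have "\<dots> \<le> 2 * a\<^sup>2" using ba b0 by (simp add: power_mono)
  also have "a \<le> (\<Sum>i\<in>A. (p i + q i)\<^sup>2) / 4"
  proof -
    have "a \<le> (\<Sum>i\<in>P. (p i + q i)\<^sup>2) / 4" unfolding a_def by (rule pq_sum_le)
    also have "(\<Sum>i\<in>P. (p i + q i)\<^sup>2) \<le> (\<Sum>i\<in>A. (p i + q i)\<^sup>2)"
      using fin by (intro sum_mono2) (auto simp: P_def)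
    finally show ?thesis by simp
  qed
  then have "2 * a\<^sup>2 \<le> 2 * ((\<Sum>i\<in>A. (p i + q i)\<^sup>2) / 4)\<^sup>2"
    using a0 by (simp add: power_mono)
  finally show ?thesis by (simp add: power2_eq_square)
qed



lemma abs_le_L2:
  fixes f :: "'i::finite \<Rightarrow> real"
  shows "\<bar>f i\<bar> \<le> L2_set f UNIV"
  unfolding L2_set_def
proof (rule real_le_rsqrt)
  have "(f i)\<^sup>2 \<le> (\<Sum>j\<in>UNIV. (f j)\<^sup>2)" by (rule member_le_sum) auto
  then show "\<bar>f i\<bar>\<^sup>2 \<le> (\<Sum>j\<in>UNIV. (f j)\<^sup>2)" by simp
qed

lemma dir_bound:
  fixes x s u w r :: "'i::finite \<Rightarrow> real"
  assumes gpos: "\<And>i. 0 < x i * s i"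
    and eq: "\<And>i. s i * u i + x i * w i = r i"
    and nn: "0 \<le> (\<Sum>i\<in>UNIV. u i * w i)"
  shows "(\<Sum>i\<in>UNIV. (u i * w i)\<^sup>2) \<le> (\<Sum>i\<in>UNIV. (r i)\<^sup>2 / (x i * s i))\<^sup>2 / 8"
    and "(\<Sum>i\<in>UNIV. u i * w i) \<le> (\<Sum>i\<in>UNIV. (r i)\<^sup>2 / (x i * s i)) / 4"
proof -
  define p where "p = (\<lambda>i. s i * u i / sqrt (x i * s i))"
  define q where "q = (\<lambda>i. x i * w i / sqrt (x i * s i))"
  have pq: "p i * q i = u i * w i" for i
  proof -
    have sq: "sqrt (x i * s i) * sqrt (x i * s i) = x i * s i"
      using gpos[of i] by (metis abs_of_pos real_sqrt_mult_self)
    have nz: "x i \<noteq> 0" "s i \<noteq> 0" using gpos[of i] by auto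
    have "p i * q i = (s i * x i) * (u i * w i) / (sqrt (x i * s i) * sqrt (x i * s i))"
      by (simp add: p_def q_def)
    also have "\<dots> = (s i * x i) * (u i * w i) / (s i * x i)"
      using sq by (simp add: mult.commute)
    also have "\<dots> = u i * w i" using nz by simp
    finally show ?thesis .
  qed
  have pq2: "(p i + q i)\<^sup>2 = (r i)\<^sup>2 / (x i * s i)" for i
  proof -
    have "p i + q i = r i / sqrt (x i * s i)"
      by (simp add: p_def q_def eq add_divide_distrib[symmetric])
    then show ?thesis using gpos[of i] by (simp add: power_divide)
  qed
  show "(\<Sum>i\<in>UNIV. (u i * w i)\<^sup>2) \<le> (\<Sum>i\<in>UNIV. (r i)\<^sup>2 / (x i * s i))\<^sup>2 / 8"
    using pq_lemma[of UNIV p q] nn by (simp add: pq pq2)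
  show "(\<Sum>i\<in>UNIV. u i * w i) \<le> (\<Sum>i\<in>UNIV. (r i)\<^sup>2 / (x i * s i)) / 4"
    using pq_sum_le[of p q UNIV] by (simp add: pq pq2)
qed

lemma var_id:
  fixes d :: "'i::finite \<Rightarrow> real"
  shows "(\<Sum>i\<in>UNIV. (d i - (\<Sum>j\<in>UNIV. d j) / real CARD('i))\<^sup>2)
       = (\<Sum>i\<in>UNIV. (d i)\<^sup>2) - real CARD('i) * ((\<Sum>j\<in>UNIV. d j) / real CARD('i))\<^sup>2"
proof -
  define S where "S = (\<Sum>j\<in>UNIV. d j)"
  define m where "m = real CARD('i)"
  have m0: "m > 0" by (simp add: m_def)
  have "(\<Sum>i\<in>UNIV. (d i - S / m)\<^sup>2) = (\<Sum>i\<in>UNIV. (d i)\<^sup>2 - 2 * (S/m) * d i + (S/m)\<^sup>2)"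
    by (rule sum.cong) (auto simp: power2_eq_square algebra_simps)
  also have "\<dots> = (\<Sum>i\<in>UNIV. (d i)\<^sup>2) - 2 * (S/m) * S + m * (S/m)\<^sup>2"
  proof -
    have e1: "(\<Sum>i\<in>UNIV. 2 * (S/m) * d i) = 2 * (S/m) * S"
      unfolding S_def by (rule sum_distrib_left[symmetric])
    have e2: "(\<Sum>i\<in>(UNIV::'i set). (S/m)\<^sup>2) = m * (S/m)\<^sup>2" by (simp add: m_def)
    have "(\<Sum>i\<in>UNIV. (d i)\<^sup>2 - 2 * (S/m) * d i + (S/m)\<^sup>2)
       = (\<Sum>i\<in>UNIV. (d i)\<^sup>2) - (\<Sum>i\<in>UNIV. 2 * (S/m) * d i) + (\<Sum>i\<in>(UNIV::'i set). (S/m)\<^sup>2)"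
      by (simp only: sum.distrib sum_subtractf)
    then show ?thesis by (simp only: e1 e2)
  qed
  also have "\<dots> = (\<Sum>i\<in>UNIV. (d i)\<^sup>2) - m * (S/m)\<^sup>2"
    using m0 by (simp add: power2_eq_square field_simps)
  finally show ?thesis by (simp add: S_def m_def)
qed

lemma numeric_final:
  fixes y :: real
  assumes "0 < y" "y\<^sup>2 \<le> 1/2"
  shows "(1 - 0.59 * y + 0.087025 * y\<^sup>2) * (1 + y\<^sup>2 / 8) \<le> (1 - 0.2348 * y)\<^sup>2"
proof -
  have y1: "y \<le> 0.7072"
  proof (rule ccontr)
    assume "\<not> y \<le> 0.7072"
    then have "0.7072 * 0.7072 < y * y" by (intro mult_strict_mono) auto
    with assms show False by (simp add: power2_eq_square)
  qed
  have "y\<^sup>2 * (-0.07375 + 0.010878125 * y) \<le> 0"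
    using y1 by (intro mult_nonneg_nonpos) auto
  then have P: "-0.1204 + 0.15689396 * y - 0.07375 * y\<^sup>2 + 0.010878125 * y^3 \<le> 0"
    using y1 by (simp add: power2_eq_square power3_eq_cube algebra_simps)
  have "(1 - 0.59 * y + 0.087025 * y\<^sup>2) * (1 + y\<^sup>2 / 8) - (1 - 0.2348 * y)\<^sup>2
     = y * (-0.1204 + 0.15689396 * y - 0.07375 * y\<^sup>2 + 0.010878125 * y^3)"
    by (simp add: power2_eq_square power3_eq_cube field_simps)
  also have "\<dots> \<le> 0" using P assms(1) by (simp add: mult_nonneg_nonpos)
  finally show ?thesis by simp
qed



lemma pc_core:
  fixes x s u w u2 w2 :: "'i::finite \<Rightarrow> real" and \<alpha> \<mu> \<delta> N \<mu>h :: real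
  assumes m2: "real CARD('i) \<ge> 2"
  assumes mu_def: "\<mu> = (\<Sum>i\<in>UNIV. x i * s i) / real CARD('i)"
  assumes inv1: "\<mu> > 0" and inv2: "L2_set (\<lambda>i. x i * s i - \<mu>) UNIV \<le> \<mu> / 4"
  assumes pr: "\<And>i. s i * u i + x i * w i = - (x i * s i)" and prn: "0 \<le> (\<Sum>i\<in>UNIV. u i * w i)"
  assumes dl_def: "\<delta> = (\<Sum>i\<in>UNIV. u i * w i) / real CARD('i)"
  assumes N_def: "N = sqrt (\<Sum>i\<in>UNIV. (u i * w i - \<delta>)\<^sup>2)"
  assumes al: "\<alpha> = step_alpha \<mu> N"
  assumes muh_def: "\<mu>h = (\<Sum>i\<in>UNIV. (x i + \<alpha> * u i) * (s i + \<alpha> * w i)) / real CARD('i)"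
  assumes co: "\<And>i. (s i + \<alpha> * w i) * u2 i + (x i + \<alpha> * u i) * w2 i
                     = \<mu>h - (x i + \<alpha> * u i) * (s i + \<alpha> * w i)"
    and con: "0 \<le> (\<Sum>i\<in>UNIV. u2 i * w2 i)"
  shows "let x' = (\<lambda>i. x i + \<alpha> * u i + u2 i); s' = (\<lambda>i. s i + \<alpha> * w i + w2 i);
             \<mu>' = (\<Sum>i\<in>UNIV. x' i * s' i) / real CARD('i) in
         \<mu>' > 0 \<and> L2_set (\<lambda>i. x' i * s' i - \<mu>') UNIV \<le> \<mu>' / 4 \<and>
         \<mu>' \<le> (1 - 0.2348 / sqrt (real CARD('i)))\<^sup>2 * \<mu>"
proof -
  define m where "m = real CARD('i)"
  have m0: "m > 0" and m2': "m \<ge> 2" using m2 by (auto simp: m_def)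
  define g where "g = (\<lambda>i. x i * s i)"
  define d where "d = (\<lambda>i. u i * w i)"
  have glb: "g i \<ge> 3 * \<mu> / 4" for i
  proof -
    have "\<bar>g i - \<mu>\<bar> \<le> \<mu> / 4" using abs_le_L2[of "\<lambda>i. g i - \<mu>" i] inv2 by (simp add: g_def)
    then show ?thesis by linarith
  qed
  have gpos: "0 < x i * s i" for i using glb[of i] inv1 by (simp add: g_def)
  have sg: "(\<Sum>i\<in>UNIV. (- (x i * s i))\<^sup>2 / (x i * s i)) = m * \<mu>"
  proof -
    have "(\<Sum>i\<in>UNIV. (- (x i * s i))\<^sup>2 / (x i * s i)) = (\<Sum>i\<in>UNIV. x i * s i)"
      by (rule sum.cong) (use gpos in \<open>auto simp: power2_eq_square\<close>)
    then show ?thesis using m0 by (simp add: mu_def m_def)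
  qed
  have d2: "(\<Sum>i\<in>UNIV. (d i)\<^sup>2) \<le> (m * \<mu>)\<^sup>2 / 8"
    using dir_bound(1)[of x s u w "\<lambda>i. - (x i * s i)", OF gpos pr prn] sg by (simp add: d_def)
  have d1: "(\<Sum>i\<in>UNIV. d i) \<le> m * \<mu> / 4"
    using dir_bound(2)[of x s u w "\<lambda>i. - (x i * s i)", OF gpos pr prn] sg by (simp add: d_def)
  have dl0: "0 \<le> \<delta>" using prn m0 by (simp add: dl_def)
  have dlu: "\<delta> \<le> \<mu> / 4" using d1 m0 by (simp add: dl_def d_def m_def divide_simps mult.commute)
  have NN: "(\<Sum>i\<in>UNIV. (d i - \<delta>)\<^sup>2) \<le> (\<Sum>i\<in>UNIV. (d i)\<^sup>2)"
    using var_id[of d] m0 by (simp add: dl_def d_def m_def)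
  have N0: "0 \<le> N" unfolding N_def by (intro real_sqrt_ge_zero sum_nonneg) auto
  have N2: "N\<^sup>2 \<le> (m * \<mu>)\<^sup>2 / 8"
  proof -
    have "0 \<le> (\<Sum>i\<in>UNIV. (u i * w i - \<delta>)\<^sup>2)" by (intro sum_nonneg) auto
    then show ?thesis using NN d2 by (simp add: N_def d_def)
  qed
  have NL2: "N = L2_set (\<lambda>i. d i - \<delta>) UNIV" by (simp add: N_def L2_set_def d_def)
  define c :: real where "c = 0.59"
  define y where "y = 1 / sqrt m"
  have y0: "y > 0" using m0 by (simp add: y_def)
  have yy: "y\<^sup>2 = 1 / m" using m0 by (simp add: y_def power_divide)
  have yh: "y\<^sup>2 \<le> 1/2"
  proof -
    have "1/m \<le> 1/2" using m2' by (intro divide_left_mono) auto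
    then show ?thesis using yy by simp
  qed
  have cy: "c * y \<le> 1/2"
  proof -
    have "(c * y)\<^sup>2 = c\<^sup>2 * y\<^sup>2" by (simp add: power_mult_distrib)
    also have "\<dots> \<le> c\<^sup>2 * (1/2)" using yh by (intro mult_left_mono) auto
    also have "\<dots> \<le> (1/2)\<^sup>2" by (simp add: c_def power2_eq_square)
    finally have "(c * y)\<^sup>2 \<le> (1/2)\<^sup>2" .
    then show ?thesis by (rule power2_le_imp_le) simp
  qed
  have a_pos: "0 < \<alpha>" and a_le: "\<alpha> \<le> 1/2"
    using inv1 N0 by (auto simp: al step_alpha_def)
  have aN: "\<alpha>\<^sup>2 * N \<le> \<mu> / 8"
  proof (cases "N = 0")
    case True then show ?thesis using inv1 by simp
  next
    case False
    then have Np: "N > 0" using N0 by simp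
    have "\<alpha> \<le> sqrt (\<mu> / (8 * N))" using False by (simp add: al step_alpha_def)
    then have "\<alpha>\<^sup>2 \<le> \<mu> / (8 * N)" using a_pos inv1 Np
      by (metis less_imp_le power_mono real_sqrt_pow2 zero_le_divide_iff zero_le_mult_iff zero_le_numeral)
    then show ?thesis using Np by (simp add: divide_simps algebra_simps)
  qed
  have a_lb: "c * y \<le> \<alpha>"
  proof (cases "N = 0")
    case True then show ?thesis using cy by (simp add: al step_alpha_def)
  next
    case False
    then have Np: "N > 0" using N0 by simp
    have "(c\<^sup>2 * 8 * N)\<^sup>2 = 64 * c^4 * N\<^sup>2" by (simp add: power2_eq_square power4_eq_xxxx)
    also have "\<dots> \<le> 64 * c^4 * ((m * \<mu>)\<^sup>2 / 8)" using N2 by (simp add: c_def)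
    also have "\<dots> = (8 * c^4) * (m * \<mu>)\<^sup>2" by simp
    also have "\<dots> \<le> 1 * (m * \<mu>)\<^sup>2"
      by (intro mult_right_mono) (auto simp: c_def power4_eq_xxxx)
    also have "\<dots> = (m * \<mu>)\<^sup>2" by simp
    finally have "c\<^sup>2 * 8 * N \<le> m * \<mu>" by (rule power2_le_imp_le) (use m0 inv1 in simp)
    then have "c\<^sup>2 * y\<^sup>2 \<le> \<mu> / (8 * N)" using Np m0 by (simp add: yy divide_simps algebra_simps)
    then have "sqrt ((c * y)\<^sup>2) \<le> sqrt (\<mu> / (8 * N))" by (simp add: power_mult_distrib)
    then have "c * y \<le> sqrt (\<mu> / (8 * N))" using y0 by (simp add: c_def)
    then show ?thesis using cy False by (simp add: al step_alpha_def)
  qed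
  define gh where "gh = (\<lambda>i. (x i + \<alpha> * u i) * (s i + \<alpha> * w i))"
  have gh_eq: "gh i = (1 - \<alpha>) * g i + \<alpha>\<^sup>2 * d i" for i
  proof -
    have "gh i = x i * s i + \<alpha> * (s i * u i + x i * w i) + \<alpha>\<^sup>2 * (u i * w i)"
      by (simp add: gh_def power2_eq_square algebra_simps)
    then show ?thesis using pr[of i] unfolding g_def d_def by algebra
  qed
  have muh_eq: "\<mu>h = (1 - \<alpha>) * \<mu> + \<alpha>\<^sup>2 * \<delta>"
  proof -
    have "\<mu>h = (\<Sum>i\<in>UNIV. (1 - \<alpha>) * g i + \<alpha>\<^sup>2 * d i) / m"
      by (simp add: muh_def m_def gh_eq[unfolded gh_def])
    also have "\<dots> = (1 - \<alpha>) * ((\<Sum>i\<in>UNIV. g i) / m) + \<alpha>\<^sup>2 * ((\<Sum>i\<in>UNIV. d i) / m)"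
      by (simp add: sum.distrib sum_distrib_left[symmetric] add_divide_distrib)
    finally show ?thesis by (simp add: mu_def dl_def g_def d_def m_def)
  qed
  have muh_lb: "\<mu>h \<ge> (1 - \<alpha>) * \<mu>" using muh_eq dl0 by simp
  have muh_lb2: "\<mu>h \<ge> \<mu> / 2"
  proof -
    have "(1/2) * \<mu> \<le> (1 - \<alpha>) * \<mu>" using a_le inv1 by (intro mult_right_mono) auto
    then show ?thesis using muh_lb by simp
  qed
  have muh_pos: "\<mu>h > 0" using muh_lb2 inv1 by simp
  have muh_ub: "\<mu>h \<le> (1 - \<alpha> + \<alpha>\<^sup>2 / 4) * \<mu>"
  proof -
    have "\<alpha>\<^sup>2 * \<delta> \<le> \<alpha>\<^sup>2 * (\<mu> / 4)" using dlu by (intro mult_left_mono) auto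
    then show ?thesis using muh_eq by (simp add: algebra_simps)
  qed
  have ghdev: "L2_set (\<lambda>i. gh i - \<mu>h) UNIV \<le> \<mu>h / 2"
  proof -
    have "L2_set (\<lambda>i. gh i - \<mu>h) UNIV
        = L2_set (\<lambda>i. (1 - \<alpha>) * (g i - \<mu>) + \<alpha>\<^sup>2 * (d i - \<delta>)) UNIV"
      by (rule L2_set_cong) (auto simp: gh_eq muh_eq algebra_simps)
    also have "\<dots> \<le> L2_set (\<lambda>i. (1 - \<alpha>) * (g i - \<mu>)) UNIV + L2_set (\<lambda>i. \<alpha>\<^sup>2 * (d i - \<delta>)) UNIV"
      by (rule L2_set_triangle_ineq)
    also have "\<dots> = (1 - \<alpha>) * L2_set (\<lambda>i. g i - \<mu>) UNIV + \<alpha>\<^sup>2 * N"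
      using a_le by (simp add: L2_set_right_distrib NL2)
    also have "\<dots> \<le> (1 - \<alpha>) * (\<mu> / 4) + \<mu> / 8"
      using inv2 aN a_le by (intro add_mono mult_left_mono) (auto simp: g_def)
    also have "\<dots> \<le> \<mu>h / 2" using muh_lb muh_lb2 by linarith
    finally show ?thesis .
  qed
  have ghlb: "gh i \<ge> \<mu>h / 2" for i
  proof -
    have "\<bar>gh i - \<mu>h\<bar> \<le> \<mu>h / 2" using abs_le_L2[of "\<lambda>i. gh i - \<mu>h" i] ghdev by simp
    then show ?thesis by linarith
  qed
  have ghpos: "0 < (x i + \<alpha> * u i) * (s i + \<alpha> * w i)" for i
    using ghlb[of i] muh_pos by (simp add: gh_def)
  define r where "r = (\<lambda>i. \<mu>h - gh i)"
  have r2: "(\<Sum>i\<in>UNIV. (r i)\<^sup>2) \<le> (\<mu>h / 2)\<^sup>2"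
  proof -
    have "(\<Sum>i\<in>UNIV. (r i)\<^sup>2) = (\<Sum>i\<in>UNIV. (gh i - \<mu>h)\<^sup>2)"
      by (rule sum.cong) (auto simp: r_def power2_commute)
    then have "sqrt (\<Sum>i\<in>UNIV. (r i)\<^sup>2) \<le> \<mu>h / 2" using ghdev by (simp add: L2_set_def)
    then show ?thesis by (rule sqrt_le_D)
  qed
  have sr: "(\<Sum>i\<in>UNIV. (r i)\<^sup>2 / gh i) \<le> \<mu>h / 2"
  proof -
    have "(\<Sum>i\<in>UNIV. (r i)\<^sup>2 / gh i) \<le> (\<Sum>i\<in>UNIV. (r i)\<^sup>2 / (\<mu>h / 2))"
    proof (rule sum_mono)
      fix i
      have "0 < gh i" using ghlb[of i] muh_pos by simp
      then show "(r i)\<^sup>2 / gh i \<le> (r i)\<^sup>2 / (\<mu>h / 2)"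
        using ghlb[of i] muh_pos by (intro divide_left_mono) auto
    qed
    also have "\<dots> = (\<Sum>i\<in>UNIV. (r i)\<^sup>2) / (\<mu>h / 2)" by (rule sum_divide_distrib[symmetric])
    also have "\<dots> \<le> (\<mu>h / 2)\<^sup>2 / (\<mu>h / 2)" using r2 muh_pos by (intro divide_right_mono) auto
    also have "\<dots> = \<mu>h / 2" by (simp add: power2_eq_square)
    finally show ?thesis .
  qed
  have sr0: "0 \<le> (\<Sum>i\<in>UNIV. (r i)\<^sup>2 / gh i)"
  proof (intro sum_nonneg)
    fix i
    have "0 < gh i" using ghlb[of i] muh_pos by simp
    then show "0 \<le> (r i)\<^sup>2 / gh i" by simp
  qed
  have co': "\<And>i. (s i + \<alpha> * w i) * u2 i + (x i + \<alpha> * u i) * w2 i = r i"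
    using co by (simp add: r_def gh_def)
  define d' where "d' = (\<lambda>i. u2 i * w2 i)"
  have dd2: "(\<Sum>i\<in>UNIV. (d' i)\<^sup>2) \<le> (\<mu>h / 2)\<^sup>2 / 8"
  proof -
    have "(\<Sum>i\<in>UNIV. (d' i)\<^sup>2) \<le> (\<Sum>i\<in>UNIV. (r i)\<^sup>2 / gh i)\<^sup>2 / 8"
      using dir_bound(1)[of "\<lambda>i. x i + \<alpha> * u i" "\<lambda>i. s i + \<alpha> * w i" u2 w2 r, OF ghpos co' con]
      by (simp add: d'_def gh_def)
    also have "\<dots> \<le> (\<mu>h / 2)\<^sup>2 / 8" using sr sr0 by (intro divide_right_mono power_mono) auto
    finally show ?thesis .
  qed
  have dd1: "(\<Sum>i\<in>UNIV. d' i) \<le> \<mu>h / 8"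
  proof -
    have "(\<Sum>i\<in>UNIV. d' i) \<le> (\<Sum>i\<in>UNIV. (r i)\<^sup>2 / gh i) / 4"
      using dir_bound(2)[of "\<lambda>i. x i + \<alpha> * u i" "\<lambda>i. s i + \<alpha> * w i" u2 w2 r, OF ghpos co' con]
      by (simp add: d'_def gh_def)
    then show ?thesis using sr by simp
  qed
  define \<delta>' where "\<delta>' = (\<Sum>i\<in>UNIV. d' i) / m"
  have dl'0: "0 \<le> \<delta>'" using con m0 by (simp add: \<delta>'_def d'_def)
  have dl'u: "\<delta>' \<le> \<mu>h / (8 * m)" using dd1 m0 by (simp add: \<delta>'_def divide_simps mult.commute)
  define x' where "x' = (\<lambda>i. x i + \<alpha> * u i + u2 i)"
  define s' where "s' = (\<lambda>i. s i + \<alpha> * w i + w2 i)"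
  have g'_eq: "x' i * s' i = \<mu>h + d' i" for i
  proof -
    have "x' i * s' i = gh i + ((s i + \<alpha> * w i) * u2 i + (x i + \<alpha> * u i) * w2 i) + u2 i * w2 i"
      by (simp add: x'_def s'_def gh_def algebra_simps)
    then show ?thesis by (simp add: co' r_def d'_def)
  qed
  define \<mu>' where "\<mu>' = (\<Sum>i\<in>UNIV. x' i * s' i) / m"
  have mu'_eq: "\<mu>' = \<mu>h + \<delta>'"
    using m0 by (simp add: \<mu>'_def g'_eq sum.distrib \<delta>'_def add_divide_distrib m_def)
  have mu'_pos: "\<mu>' > 0" using mu'_eq dl'0 muh_pos by simp
  have dev': "L2_set (\<lambda>i. x' i * s' i - \<mu>') UNIV \<le> \<mu>' / 4"
  proof -
    have "(\<Sum>i\<in>UNIV. (x' i * s' i - \<mu>')\<^sup>2) = (\<Sum>i\<in>UNIV. (d' i - \<delta>')\<^sup>2)"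
      by (simp add: g'_eq mu'_eq)
    also have "\<dots> \<le> (\<Sum>i\<in>UNIV. (d' i)\<^sup>2)"
      using var_id[of d'] m0 by (simp add: \<delta>'_def m_def)
    also have "\<dots> \<le> (\<mu>' / 4)\<^sup>2"
    proof -
      have "(\<mu>h / 2)\<^sup>2 / 8 \<le> (\<mu>h / 4)\<^sup>2" by (simp add: power2_eq_square)
      also have "\<dots> \<le> (\<mu>' / 4)\<^sup>2" using muh_pos mu'_eq dl'0 by (intro power_mono) auto
      finally show ?thesis using dd2 by linarith
    qed
    finally show ?thesis unfolding L2_set_def using mu'_pos by (intro real_le_lsqrt) auto
  qed
  have rate1: "\<mu>' \<le> (1 - \<alpha> + \<alpha>\<^sup>2 / 4) * (1 + y\<^sup>2 / 8) * \<mu>"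
  proof -
    have "\<mu>' \<le> \<mu>h * (1 + y\<^sup>2 / 8)" using mu'_eq dl'u m0 by (simp add: yy algebra_simps)
    also have "\<dots> \<le> (1 - \<alpha> + \<alpha>\<^sup>2 / 4) * \<mu> * (1 + y\<^sup>2 / 8)"
      using muh_ub by (intro mult_right_mono) auto
    finally show ?thesis by (simp add: algebra_simps)
  qed
  have fmono: "1 - \<alpha> + \<alpha>\<^sup>2 / 4 \<le> 1 - c * y + (c * y)\<^sup>2 / 4"
  proof -
    have "(1 - c * y + (c * y)\<^sup>2 / 4) - (1 - \<alpha> + \<alpha>\<^sup>2 / 4) = (\<alpha> - c * y) * (1 - (\<alpha> + c * y) / 4)"
      by (simp add: power2_eq_square field_simps)
    also have "\<dots> \<ge> 0" using a_lb a_le cy by (intro mult_nonneg_nonneg) auto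
    finally show ?thesis by simp
  qed
  have fin: "(1 - c * y + (c * y)\<^sup>2 / 4) * (1 + y\<^sup>2 / 8) \<le> (1 - 0.2348 * y)\<^sup>2"
  proof -
    have "(c * y)\<^sup>2 / 4 = 0.087025 * y\<^sup>2" by (simp add: c_def power_mult_distrib power2_eq_square)
    then show ?thesis using numeric_final[OF y0 yh] by (simp only: c_def)
  qed
  have "\<mu>' \<le> (1 - 0.2348 * y)\<^sup>2 * \<mu>"
  proof -
    have "(1 - \<alpha> + \<alpha>\<^sup>2 / 4) * (1 + y\<^sup>2 / 8) \<le> (1 - c * y + (c * y)\<^sup>2 / 4) * (1 + y\<^sup>2 / 8)"
      using fmono by (intro mult_right_mono) auto
    also note fin
    finally show ?thesis using rate1 inv1 by (smt (verit) mult_right_mono)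
  qed
  then have "\<mu>' \<le> (1 - 0.2348 / sqrt (real CARD('i)))\<^sup>2 * \<mu>" by (simp add: y_def m_def)
  then show ?thesis using mu'_pos dev'
    by (simp add: Let_def x'_def s'_def \<mu>'_def m_def)
qed



definition vv :: "'n::finite ipm_state \<Rightarrow> 'n + 'n \<Rightarrow> real" where
  "vv x = (\<lambda>j. case x of (z, g, t, f, p) \<Rightarrow> (case j of Inl i \<Rightarrow> g$i | Inr i \<Rightarrow> t$i))"
definition ss :: "'n::finite ipm_state \<Rightarrow> 'n + 'n \<Rightarrow> real" where
  "ss x = (\<lambda>j. case x of (z, g, t, f, p) \<Rightarrow> (case j of Inl i \<Rightarrow> f$i | Inr i \<Rightarrow> p$i))"

lemma sum_Plus_UNIV:
  fixes F :: "'a::finite + 'a \<Rightarrow> real"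
  shows "(\<Sum>j\<in>UNIV. F j) = (\<Sum>i\<in>UNIV. F (Inl i)) + (\<Sum>i\<in>UNIV. F (Inr i))"
proof -
  have "(\<Sum>j\<in>UNIV. F j) = (\<Sum>j\<in>(UNIV::'a set) <+> (UNIV::'a set). F j)" by simp
  also have "\<dots> = (\<Sum>i\<in>UNIV. F (Inl i)) + (\<Sum>i\<in>UNIV. F (Inr i))"
    by (subst sum.Plus) (auto simp: o_def)
  finally show ?thesis .
qed

lemma card_Plus_n: "real CARD('n::finite + 'n) = 2 * real CARD('n)"
proof -
  have "CARD('n + 'n) = card ((UNIV::'n set) <+> (UNIV::'n set))" by simp
  also have "\<dots> = CARD('n) + CARD('n)" by (rule card_Plus) auto
  finally show ?thesis by simp
qed

lemma vts_eq: "vts x = (\<Sum>j\<in>UNIV. vv x j * ss x j)"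
  by (cases x) (simp add: vts_def vv_def ss_def sum_Plus_UNIV inner_vec_def)

lemma mu_eq: "mu (x::'n::finite ipm_state) = (\<Sum>j\<in>UNIV. vv x j * ss x j) / real CARD('n + 'n)"
  by (simp add: mu_def vts_eq card_Plus_n)

lemma dev_eq: "dev (d::'n::finite ipm_state) = sqrt (\<Sum>j\<in>UNIV. (vv d j * ss d j - mu d)\<^sup>2)"
  by (cases d) (simp add: dev_def vv_def ss_def sum_Plus_UNIV sum.distrib)

lemma vv_add: "vv (x + c *\<^sub>R d) j = vv x j + c * vv d j"
  by (cases x; cases d) (auto simp: vv_def split: sum.split)
lemma ss_add: "ss (x + c *\<^sub>R d) j = ss x j + c * ss d j"
  by (cases x; cases d) (auto simp: ss_def split: sum.split)
lemma vv_add1: "vv (x + d) j = vv x j + vv d j"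
  by (cases x; cases d) (auto simp: vv_def split: sum.split)
lemma ss_add1: "ss (x + d) j = ss x j + ss d j"
  by (cases x; cases d) (auto simp: ss_def split: sum.split)

lemma newton_props:
  fixes H :: "real^'n^'n" and x d :: "'n::finite ipm_state"
  assumes psd: "\<forall>x. 0 \<le> x \<bullet> (H *v x)" and lam: "lam > 0"
    and ns: "newton_sys H lam \<sigma> m x d"
  shows "\<And>j. ss x j * vv d j + vv x j * ss d j = \<sigma> * m - vv x j * ss x j"
    and "0 \<le> (\<Sum>j\<in>UNIV. vv d j * ss d j)"
proof -
  obtain z g t f p where x: "x = (z, g, t, f, p)" by (cases x) auto
  obtain dz dg dt df dp where d: "d = (dz, dg, dt, df, dp)" by (cases d) auto
  have ns': "(2 * lam) *\<^sub>R (H *v dz) + dg - dt = 0 \<and> dz + df = 0 \<and> - dz + dp = 0 \<and>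
      (\<forall>i. f$i * dg$i + g$i * df$i = \<sigma> * m - g$i * f$i) \<and>
      (\<forall>i. p$i * dt$i + t$i * dp$i = \<sigma> * m - t$i * p$i)"
    using ns unfolding newton_sys_def x d prod.case by assumption
  then have e1: "(2 * lam) *\<^sub>R (H *v dz) + dg - dt = 0"
    and e4: "\<forall>i. f$i * dg$i + g$i * df$i = \<sigma> * m - g$i * f$i"
    and e5: "\<forall>i. p$i * dt$i + t$i * dp$i = \<sigma> * m - t$i * p$i" by blast+
  have e2: "df = - dz" using ns' neg_eq_iff_add_eq_0[of dz df] by simp
  have "dp = dz + (- dz + dp)" by simp
  then have e3: "dp = dz" using ns' by simp
  show "\<And>j. ss x j * vv d j + vv x j * ss d j = \<sigma> * m - vv x j * ss x j"
    subgoal for j using e4 e5 by (cases j) (auto simp: vv_def ss_def x d)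
    done
  have "(\<Sum>j\<in>UNIV. vv d j * ss d j) = dg \<bullet> df + dt \<bullet> dp"
    using vts_eq[of d] by (simp add: vts_def d)
  also have "\<dots> = - ((dg - dt) \<bullet> dz)" by (simp add: e2 e3 inner_diff_left)
  also have "dg - dt = - ((2 * lam) *\<^sub>R (H *v dz))"
  proof -
    have "dg - dt = ((2 * lam) *\<^sub>R (H *v dz) + dg - dt) - (2 * lam) *\<^sub>R (H *v dz)" by simp
    then show ?thesis using e1 by simp
  qed
  also have "- ((- ((2 * lam) *\<^sub>R (H *v dz))) \<bullet> dz) = (2 * lam) * (dz \<bullet> (H *v dz))"
    by (simp add: inner_commute)
  also have "\<dots> \<ge> 0" using psd lam by simp
  finally show "0 \<le> (\<Sum>j\<in>UNIV. vv d j * ss d j)" .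
qed



lemma vv_scale: "vv (c *\<^sub>R d) j = c * vv d j"
  by (cases d) (auto simp: vv_def split: sum.split)
lemma ss_scale: "ss (c *\<^sub>R d) j = c * ss d j"
  by (cases d) (auto simp: ss_def split: sum.split)

lemma step_lemma:
  fixes H :: "real^'n^'n" and x x' :: "'n::finite ipm_state"
  assumes psd: "\<forall>x. 0 \<le> x \<bullet> (H *v x)" and lam: "lam > 0"
    and i1: "mu x > 0" and i2: "L2_set (\<lambda>j. vv x j * ss x j - mu x) UNIV \<le> mu x / 4"
    and st: "pc_step H lam x x'"
  shows "mu x' > 0 \<and> L2_set (\<lambda>j. vv x' j * ss x' j - mu x') UNIV \<le> mu x' / 4 \<and>
         mu x' \<le> (1 - 0.2348 / sqrt (2 * real CARD('n)))\<^sup>2 * mu x"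
proof -
  obtain dpr dco where n1: "newton_sys H lam 0 (mu x) x dpr"
    and n2: "newton_sys H lam 1 (mu (x + step_alpha (mu x) (dev dpr) *\<^sub>R dpr))
                (x + step_alpha (mu x) (dev dpr) *\<^sub>R dpr) dco"
    and x': "x' = (x + step_alpha (mu x) (dev dpr) *\<^sub>R dpr) + dco"
    using st unfolding pc_step_def Let_def by blast
  define \<alpha> where "\<alpha> = step_alpha (mu x) (dev dpr)"
  define xh where "xh = x + \<alpha> *\<^sub>R dpr"
  have n2': "newton_sys H lam 1 (mu xh) xh dco" using n2 by (simp add: xh_def \<alpha>_def)
  have x'': "x' = xh + dco" using x' by (simp add: xh_def \<alpha>_def)
  have m2: "real CARD('n + 'n) \<ge> 2" unfolding card_Plus_n
    using finite_UNIV_card_ge_0[where 'a='n] by simp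
  have pr: "\<And>j. ss x j * vv dpr j + vv x j * ss dpr j = - (vv x j * ss x j)"
    using newton_props(1)[OF psd lam n1] by simp
  have prn: "0 \<le> (\<Sum>j\<in>UNIV. vv dpr j * ss dpr j)" by (rule newton_props(2)[OF psd lam n1])
  have muh: "mu xh = (\<Sum>j\<in>UNIV. (vv x j + \<alpha> * vv dpr j) * (ss x j + \<alpha> * ss dpr j)) / real CARD('n + 'n)"
    by (simp add: mu_eq xh_def vv_add ss_add)
  have co: "\<And>j. (ss x j + \<alpha> * ss dpr j) * vv dco j + (vv x j + \<alpha> * vv dpr j) * ss dco j
             = mu xh - (vv x j + \<alpha> * vv dpr j) * (ss x j + \<alpha> * ss dpr j)"
    using newton_props(1)[OF psd lam n2'] by (simp add: xh_def vv_add ss_add)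
  have con: "0 \<le> (\<Sum>j\<in>UNIV. vv dco j * ss dco j)" by (rule newton_props(2)[OF psd lam n2'])
  note core = pc_core[where x="vv x" and s="ss x" and \<mu>="mu x" and u="vv dpr" and w="ss dpr"
      and \<delta>="mu dpr" and N="dev dpr" and \<alpha>=\<alpha> and \<mu>h="mu xh" and ?u2.0="vv dco" and ?w2.0="ss dco",
      OF m2 mu_eq i1 i2 pr prn mu_eq dev_eq \<alpha>_def muh co con]
  have vx: "vv x' = (\<lambda>i. vv x i + \<alpha> * vv dpr i + vv dco i)"
    by (rule ext) (simp add: x'' xh_def vv_scale vv_add1)
  have sx: "ss x' = (\<lambda>i. ss x i + \<alpha> * ss dpr i + ss dco i)"
    by (rule ext) (simp add: x'' xh_def ss_scale ss_add1)
  have mx: "mu x' = (\<Sum>i\<in>UNIV. vv x' i * ss x' i) / (2 * real CARD('n))"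
    by (simp add: mu_eq card_Plus_n)
  show ?thesis using core unfolding Let_def vx[symmetric] sx[symmetric] card_Plus_n mx .
qed


theorem theorem1:
  fixes H :: "real^'n^'n" and h :: "real^'n" and lam \<epsilon> :: real
    and X :: "nat \<Rightarrow> 'n::finite ipm_state"
  assumes "transpose H = H"
    and "\<forall>x. 0 \<le> x \<bullet> (H *v x)"
    and "h \<noteq> 0"
    and "lam = 1 / (4 * sqrt 2 * norm h)"
    and "\<epsilon> > 0"
    and "X 0 = (0, ones - lam *\<^sub>R h, ones + lam *\<^sub>R h, ones, ones)"
    and "\<forall>k. pc_step H lam (X k) (X (Suc k))"
  shows "(\<forall>k. mu (X (Suc k)) \<le> (1 - 0.2348 / sqrt (2 * real CARD('n)))\<^sup>2 * mu (X k)) \<and>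
         (\<forall>k. k \<ge> nat \<lceil>ln (2 * real CARD('n) / \<epsilon>)
                 / (- 2 * ln (1 - 0.2348 / sqrt (2 * real CARD('n))))\<rceil>
              \<longrightarrow> vts (X k) \<le> \<epsilon>)"
proof -
  note psd = assms(2)
  have hn: "norm h > 0" using assms(3) by simp
  have lam: "lam > 0" using hn by (simp add: assms(4))
  define q where "q = 1 - 0.2348 / sqrt (2 * real CARD('n))"
  have n1: "real CARD('n) \<ge> 1" using finite_UNIV_card_ge_0[where 'a='n] by simp
  have sq2: "sqrt (2 * real CARD('n)) \<ge> 1"
  proof -
    have "1 \<le> 2 * real CARD('n)" using n1 by linarith
    then show ?thesis by simp
  qed
  have q0: "0 < q" and q1: "q < 1"
  proof -
    obtain S where S: "S = sqrt (2 * real CARD('n))" by blast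
    have S1: "S \<ge> 1" using sq2 S by simp
    have b1: "0.2348 / S < 1" using S1 by (simp add: divide_less_eq)
    have b2: "0 < 0.2348 / S" using S1 by simp
    show "0 < q" unfolding q_def S[symmetric] using b1 by simp
    show "q < 1" unfolding q_def S[symmetric] using b2 by simp
  qed
  define Inv :: "'n ipm_state \<Rightarrow> bool" where "Inv x \<longleftrightarrow> mu x > 0 \<and> L2_set (\<lambda>j. vv x j * ss x j - mu x) UNIV \<le> mu x / 4" for x
  have v0: "vv (X 0) (Inl i) * ss (X 0) (Inl i) = 1 - lam * h$i"
       "vv (X 0) (Inr i) * ss (X 0) (Inr i) = 1 + lam * h$i" for i
    by (simp_all add: assms(6) vv_def ss_def ones_def)
  have s0: "(\<Sum>j\<in>UNIV. vv (X 0) j * ss (X 0) j) = 2 * real CARD('n)"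
  proof -
    have "(\<Sum>j\<in>UNIV. vv (X 0) j * ss (X 0) j) = (\<Sum>i\<in>UNIV. (1 - lam * h$i) + (1 + lam * h$i))"
      by (simp only: sum_Plus_UNIV v0 sum.distrib)
    also have "\<dots> = (\<Sum>i\<in>(UNIV::'n set). 2)" by simp
    finally show ?thesis by simp
  qed
  have mu0: "mu (X 0) = 1" using n1 by (simp add: mu_eq s0 card_Plus_n)
  have hh: "(\<Sum>i\<in>UNIV. (h$i)\<^sup>2) = (norm h)\<^sup>2"
  proof -
    have "0 \<le> (\<Sum>i\<in>UNIV. (h$i)\<^sup>2)" by (intro sum_nonneg) auto
    then show ?thesis by (simp add: norm_vec_def L2_set_def)
  qed
  have lh: "(lam * norm h)\<^sup>2 = 1 / 32"
  proof -
    have "lam * norm h = 1 / (4 * sqrt 2)" using hn by (simp add: assms(4))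
    then show ?thesis by (simp add: power2_eq_square)
  qed
  have Inv0: "Inv (X 0)"
  proof -
    have "(\<Sum>j\<in>UNIV. (vv (X 0) j * ss (X 0) j - mu (X 0))\<^sup>2) = (\<Sum>i\<in>UNIV. 2 * lam\<^sup>2 * (h$i)\<^sup>2)"
    proof -
      have "(\<Sum>j\<in>UNIV. (vv (X 0) j * ss (X 0) j - mu (X 0))\<^sup>2)
          = (\<Sum>i\<in>UNIV. (1 - lam * h$i - 1)\<^sup>2 + (1 + lam * h$i - 1)\<^sup>2)"
        by (simp only: sum_Plus_UNIV v0 mu0 sum.distrib)
      also have "\<dots> = (\<Sum>i\<in>UNIV. 2 * lam\<^sup>2 * (h$i)\<^sup>2)"
        by (rule sum.cong) (auto simp: power2_eq_square)
      finally show ?thesis .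
    qed
    also have "\<dots> = 2 * (lam * norm h)\<^sup>2"
      by (simp add: sum_distrib_left[symmetric] hh power_mult_distrib)
    also have "\<dots> = (1/4)\<^sup>2" using lh by (simp add: power2_eq_square)
    finally show ?thesis unfolding Inv_def L2_set_def using mu0 by simp
  qed
  have all: "Inv (X k) \<and> mu (X k) \<le> (q\<^sup>2) ^ k" for k
  proof (induction k)
    case 0 then show ?case using Inv0 mu0 by simp
  next
    case (Suc k)
    have st: "mu (X (Suc k)) > 0 \<and> L2_set (\<lambda>j. vv (X (Suc k)) j * ss (X (Suc k)) j - mu (X (Suc k))) UNIV \<le> mu (X (Suc k)) / 4 \<and>
         mu (X (Suc k)) \<le> q\<^sup>2 * mu (X k)"
      using step_lemma[OF psd lam _ _ assms(7)[rule_format, of k]] Suc.IH unfolding Inv_def q_def by blast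
    have "mu (X (Suc k)) \<le> q\<^sup>2 * (q\<^sup>2) ^ k"
      using st Suc.IH by (meson order_trans mult_left_mono zero_le_power2)
    then show ?case using st by (simp add: Inv_def)
  qed
  have part1: "\<forall>k. mu (X (Suc k)) \<le> q\<^sup>2 * mu (X k)"
  proof
    fix k
    show "mu (X (Suc k)) \<le> q\<^sup>2 * mu (X k)"
      using step_lemma[OF psd lam _ _ assms(7)[rule_format, of k]] all[of k] unfolding Inv_def q_def by blast
  qed
  have part2: "vts (X k) \<le> \<epsilon>"
    if k: "k \<ge> nat \<lceil>ln (2 * real CARD('n) / \<epsilon>) / (- 2 * ln q)\<rceil>" for k
  proof -
    have lq: "ln q < 0" using q0 q1 by simp
    have "ln (2 * real CARD('n) / \<epsilon>) / (- 2 * ln q) \<le> real k"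
      using real_nat_ceiling_ge[of "ln (2 * real CARD('n) / \<epsilon>) / (- 2 * ln q)"]
        of_nat_mono[OF k, where 'a=real] by (rule order_trans)
    then have "ln (2 * real CARD('n) / \<epsilon>) \<le> real k * (- 2 * ln q)"
    proof -
      have cpos: "0 < - 2 * ln q" using lq by simp
      show ?thesis using \<open>ln (2 * real CARD('n) / \<epsilon>) / (- 2 * ln q) \<le> real k\<close>
        by (subst (asm) pos_divide_le_eq[OF cpos])
    qed
    then have "ln ((q\<^sup>2) ^ k) \<le> - ln (2 * real CARD('n) / \<epsilon>)"
      using q0 by (simp add: ln_realpow algebra_simps)
    also have "\<dots> = ln (\<epsilon> / (2 * real CARD('n)))"
      using assms(5) n1 by (simp add: ln_div)
    finally have "(q\<^sup>2) ^ k \<le> \<epsilon> / (2 * real CARD('n))"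
      using q0 assms(5) n1 by (subst (asm) ln_le_cancel_iff) auto
    then have "2 * real CARD('n) * (q\<^sup>2) ^ k \<le> \<epsilon>" using n1 by (simp add: field_simps)
    moreover have "vts (X k) = 2 * real CARD('n) * mu (X k)" using n1 by (simp add: mu_def)
    moreover have "mu (X k) \<le> (q\<^sup>2) ^ k" using all by blast
    ultimately show ?thesis using n1
      by (smt (verit) mult_left_mono of_nat_0_le_iff)
  qed
  show ?thesis using part1 part2 unfolding q_def by blast
qed


end
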